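(* Fix $p_q\in(0,1)$ and $p_a\in[0,1]$, and let $\mu_p = f_{pd}+p_a f_{ps}(1-f_{pd})$. Under the randomized service cooperative policy with probabilistic relaying described in the context, all three queues $Q_p$, $Q_{sp}$, $Q_s$ are stable if and only if $(\lambda_p,\lambda_s)$ (with $\lambda_p,\lambda_s\ge 0$) belongs to $$\mathbf{R}(p_q,p_a)=\Big\{(\lambda_p,\lambda_s):\ \lambda_s< p_q f_{sd}\Big[1-\frac{\lambda_p}{f_{pd}+p_a f_{ps}(1-f_{pd})}\Big],\ \ \lambda_p<\frac{f_{sd}(1-p_q)\,[f_{pd}+p_a f_{ps}(1-f_{pd})]}{f_{sd}(1-p_q)+p_a f_{ps}(1-f_{pd})}\Big\}.$$ Equivalently: $Q_p$ is served at rate $\mu_p$; $Q_{sp}$ is stable iff $p_a f_{ps}(1-f_{pd})\frac{\lambda_p}{\mu_p}<\big(1-\frac{\lambda_p}{\mu_p}\big)(1-p_q)f_{sd}$; $Q_s$ is stable iff $\lambda_s<p_q f_{sd}\big(1-\frac{\lambda_p}{\mu_p}\big)$; and the condition for $Q_{sp}$ implies $\lambda_p<\mu_p$.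
   Context: Cognitive radio system in slotted time with a primary user (PU), a secondary user (SU) and a common destination. Packets arrive at the PU queue $Q_p$ according to a Bernoulli process of rate $\lambda_p\in[0,1]$ and at the SU own-data queue $Q_s$ according to an independent Bernoulli process of rate $\lambda_s\in[0,1]$, i.i.d. across slots. The SU also keeps a relay queue $Q_{sp}$ for PU packets. All buffers are infinite. Each queue evolves as $Q_k^{t+1}=[Q_k^t-Y_k^t]^+ + X_k^t$, $k\in\{p,sp,s\}$, where $X_k^t,Y_k^t\in\{0,1\}$ are arrivals and departures in slot $t$. Link success probabilities (constants in $(0,1)$, independent across slots and links): PU→destination $f_{pd}$, SU→destination $f_{sd}$, PU→SU $f_{ps}$, with $f_{pd}<f_{sd}$. Policy with parameters $p_q\in(0,1)$ (queue-selection probability) and $p_a\in[0,1]$ (admission probability): (1) whenever $Q_p$ is nonempty the PU transmits its head packet and the SU stays silent; (2) if the destination receives it, it leaves the system; (3) otherwise, if the SU decodes it (prob. $f_{ps}$), it is admitted to $Q_{sp}$ with probability $p_a$ (and removed from $Q_p$), else discarded by the SU; (4) if neither received by the destination nor admitted to $Q_{sp}$, it stays in $Q_p$; (5) when $Q_p$ is empty, the SU selects $Q_s$ with probability $p_q$ or $Q_{sp}$ with probability $1-p_q$; if the selected queue is nonempty its head packet is transmitted and leaves upon success (prob. $f_{sd}$), else stays; if the selected queue is empty the slot is idle (even if the other queue is nonempty). ACKs are instantaneous and error-free; sensing is perfect. A queue is stable if its length does not grow unboundedly (e.g., it has a stationary distribution; by Loynes' theorem, arrival rate strictly less than service rate).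 *)

theory Defs
  imports "HOL-Probability.Probability"
begin

text \<open>System state: (length of Q_p, length of Q_sp, length of Q_s).\<close>
type_synonym qstate = "nat \<times> nat \<times> nat"

text \<open>Parameters: lp = lambda_p, ls = lambda_s, fpd, fsd, fps, pq, pa.
  Queue update: Q' = [Q - Y]^+ + X (departure first, then arrival).\<close>
definition slot ::
  "real \<Rightarrow> real \<Rightarrow> real \<Rightarrow> real \<Rightarrow> real \<Rightarrow> real \<Rightarrow> real \<Rightarrow> qstate \<Rightarrow> qstate pmf" where
  "slot lp ls fpd fsd fps pq pa s =
     (case s of (qp, qsp, qs) \<Rightarrow>
      bind_pmf (bernoulli_pmf lp) (\<lambda>xp.
      bind_pmf (bernoulli_pmf ls) (\<lambda>xs.
      let ap = (if xp then 1 else 0 :: nat); as = (if xs then 1 else 0 :: nat) in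
      if qp > 0 then
        bind_pmf (bernoulli_pmf fpd) (\<lambda>d.
          if d then return_pmf (qp - 1 + ap, qsp, qs + as)
          else bind_pmf (bernoulli_pmf fps) (\<lambda>r.
               bind_pmf (bernoulli_pmf pa) (\<lambda>adm.
                 if r \<and> adm then return_pmf (qp - 1 + ap, qsp + 1, qs + as)
                 else return_pmf (qp + ap, qsp, qs + as))))
      else
        bind_pmf (bernoulli_pmf pq) (\<lambda>sel.
        bind_pmf (bernoulli_pmf fsd) (\<lambda>succ.
          if sel then
            return_pmf (ap, qsp, qs - (if qs > 0 \<and> succ then 1 else 0) + as)
          else
            return_pmf (ap, qsp - (if qsp > 0 \<and> succ then 1 else 0), qs + as))))))"

definition state_dist ::
  "real \<Rightarrow> real \<Rightarrow> real \<Rightarrow> real \<Rightarrow> real \<Rightarrow> real \<Rightarrow> real \<Rightarrow> nat \<Rightarrow> qstate pmf" where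
  "state_dist lp ls fpd fsd fps pq pa t =
     ((\<lambda>M. bind_pmf M (slot lp ls fpd fsd fps pq pa)) ^^ t) (return_pmf (0, 0, 0))"

text \<open>A queue (given by a projection of the state) is stable if its length does not
  grow unboundedly: the family of its length distributions over all slots is tight.\<close>
definition queue_stable :: "(nat \<Rightarrow> qstate pmf) \<Rightarrow> (qstate \<Rightarrow> nat) \<Rightarrow> bool" where
  "queue_stable D q \<longleftrightarrow>
     (\<forall>\<epsilon>>0. \<exists>M::nat. \<forall>t. measure_pmf.prob (D t) {s. q s > M} < \<epsilon>)"

definition Q_p :: "qstate \<Rightarrow> nat" where "Q_p s = fst s"
definition Q_sp :: "qstate \<Rightarrow> nat" where "Q_sp s = fst (snd s)"
definition Q_s :: "qstate \<Rightarrow> nat" where "Q_s s = snd (snd s)"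

definition stab_region ::
  "real \<Rightarrow> real \<Rightarrow> real \<Rightarrow> real \<Rightarrow> real \<Rightarrow> (real \<times> real) set" where
  "stab_region fpd fsd fps pq pa =
     {(lp, ls). ls < pq * fsd * (1 - lp / (fpd + pa * fps * (1 - fpd))) \<and>
                lp < fsd * (1 - pq) * (fpd + pa * fps * (1 - fpd)) /
                     (fsd * (1 - pq) + pa * fps * (1 - fpd))}"

end

theory Submission
  imports Defs
begin

lemma E_bern:
  fixes f :: "'b \<Rightarrow> real"
  assumes "0 \<le> p" "p \<le> 1" "\<And>b. finite (set_pmf (N b))"
  shows "measure_pmf.expectation (bind_pmf (bernoulli_pmf p) N) f
       = p * measure_pmf.expectation (N True) f + (1-p) * measure_pmf.expectation (N False) f"
  using assms by (subst pmf_expectation_bind[where A=UNIV]) (auto simp: UNIV_bool)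

lemma int_bdd:
  fixes f :: "'a \<Rightarrow> real" assumes "\<And>y. \<bar>f y\<bar> \<le> B"
  shows "integrable (measure_pmf M) f"
  by (rule measure_pmf.integrable_const_bound[where B=B]) (auto simp: assms)

lemma E_bind_bdd:
  fixes f :: "'b \<Rightarrow> real" assumes "\<And>y. \<bar>f y\<bar> \<le> B"
  shows "measure_pmf.expectation (bind_pmf M N) f
       = measure_pmf.expectation M (\<lambda>x. measure_pmf.expectation (N x) f)"
  unfolding measure_pmf_bind
  by (rule integral_bind[where K="count_space UNIV" and B=B and B'=1])
     (auto simp: assms measurable_measure_pmf measure_pmf_in_subprob_algebra measure_pmf.emeasure_space_1
           measure_pmf.prob_space_axioms)

lemma pmf_bind_ge: "pmf M a * pmf (N a) y \<le> pmf (bind_pmf M N) y"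
proof -
  have "ennreal (pmf M a * pmf (N a) y) = (\<integral>\<^sup>+x. ennreal (pmf (N a) y) * indicator {a} x \<partial>measure_pmf M)"
    by (simp add: nn_integral_cmult_indicator emeasure_pmf_single ennreal_mult mult.commute)
  also have "\<dots> \<le> (\<integral>\<^sup>+x. ennreal (pmf (N x) y) \<partial>measure_pmf M)"
    by (rule nn_integral_mono) (auto split: split_indicator)
  also have "\<dots> = ennreal (pmf (bind_pmf M N) y)" by (simp add: ennreal_pmf_bind)
  finally show ?thesis by (subst (asm) ennreal_le_iff) auto
qed

lemma E_ind3:
  fixes a b1 b2 b3 :: real
  shows "measure_pmf.expectation M (\<lambda>x. a + b1 * indicator A1 x + b2 * indicator A2 x + b3 * indicator A3 x)
     = a + b1 * measure_pmf.prob M A1 + b2 * measure_pmf.prob M A2 + b3 * measure_pmf.prob M A3"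
proof -
  have i: "\<And>A. integrable (measure_pmf M) (indicator A :: _ \<Rightarrow> real)"
    by (rule int_bdd[where B=1]) (auto split: split_indicator)
  show ?thesis
    by (simp add: i integral_add integrable_add)
qed

lemma eps_lim:
  fixes X W Y :: real
  assumes "\<And>\<epsilon>. 0 < \<epsilon> \<Longrightarrow> \<epsilon> < 1 \<Longrightarrow> X \<le> W + \<epsilon> * Y"
  shows "X \<le> W"
proof (rule ccontr)
  assume "\<not> X \<le> W"
  hence d: "X - W > 0" by simp
  define \<epsilon> where "\<epsilon> = min (1/2) ((X - W) / (2 * (\<bar>Y\<bar> + 1)))"
  have e0: "0 < \<epsilon>" "\<epsilon> < 1" using d by (auto simp: \<epsilon>_def)
  have "\<epsilon> * Y \<le> \<epsilon> * \<bar>Y\<bar>" using e0 by (simp add: mult_left_mono)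
  also have "\<dots> \<le> (X - W) / (2 * (\<bar>Y\<bar> + 1)) * \<bar>Y\<bar>"
    by (rule mult_right_mono) (auto simp: \<epsilon>_def)
  also have "\<dots> < X - W"
  proof -
    have h: "(X-W)*\<bar>Y\<bar> < (X-W)*(2*(\<bar>Y\<bar>+1))" using d by (intro mult_strict_left_mono) auto
    have "(X - W) / (2 * (\<bar>Y\<bar> + 1)) * \<bar>Y\<bar> = (X-W)*\<bar>Y\<bar> / (2*(\<bar>Y\<bar>+1))" by simp
    also have "\<dots> < X - W" using h by (subst pos_divide_less_eq) (auto simp: abs_add_one_gt_zero)
    finally show ?thesis .
  qed
  finally show False using assms[OF e0] by simp
qed

lemma lin_lim:
  fixes A B :: real
  assumes "\<And>n::nat. real n * A \<le> B"
  shows "A \<le> 0"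
proof (rule ccontr)
  assume "\<not> A \<le> 0"
  hence A: "A > 0" by simp
  obtain n :: nat where "B / A < real n" using reals_Archimedean2 by blast
  hence "B < real n * A" using A by (simp add: field_simps)
  thus False using assms[of n] by simp
qed

lemma pmf_compl: "measure_pmf.prob M (UNIV - A) = 1 - measure_pmf.prob M A"
  using measure_pmf.prob_compl[of A M] by simp

lemma pmf_sub: "measure_pmf.prob M (A \<union> B) \<le> measure_pmf.prob M A + measure_pmf.prob M B"
  by (rule measure_subadditive) (auto simp: measure_pmf.emeasure_eq_measure)

locale sys =
  fixes lp ls fpd fsd fps pq pa :: real
  assumes "0 < fpd" "fpd < 1" "0 < fsd" "fsd < 1" "0 < fps" "fps < 1"
    and "fpd < fsd"
    and "0 < pq" "pq < 1" "0 \<le> pa" "pa \<le> 1"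
    and "0 \<le> lp" "lp \<le> 1" "0 \<le> ls" "ls \<le> 1"
begin
lemmas prm = sys_axioms[unfolded sys_def]
abbreviation "S \<equiv> slot lp ls fpd fsd fps pq pa"
abbreviation "D \<equiv> state_dist lp ls fpd fsd fps pq pa"
abbreviation "ES x f \<equiv> measure_pmf.expectation (S x) f"
abbreviation "mu \<equiv> fpd + pa*fps*(1-fpd)"
abbreviation "g \<equiv> pa*fps*(1-fpd)"
abbreviation "e \<equiv> (1-pq)*fsd"
abbreviation "c \<equiv> pq*fsd"

lemma par: "0 < mu" "mu < 1" "0 \<le> g" "g \<le> mu" "0 < e" "e < 1" "0 < c" "c < 1" "0 \<le> lp*mu"
  "0 \<le> ls * c" "0 \<le> lp * g"
proof -
  have "pa*fps \<le> 1*fps" using prm by (intro mult_right_mono) auto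
  moreover have "fps < 1" using prm by simp
  ultimately have "pa*fps < 1" by linarith
  hence "pa*fps*(1-fpd) < 1*(1-fpd)" using prm by (intro mult_strict_right_mono) auto
  thus "mu < 1" by simp
  show m0: "0 < mu" "0 \<le> g" using prm by (auto intro!: add_pos_nonneg mult_nonneg_nonneg)
  thus "g \<le> mu" using prm by simp
  have "(1-pq)*fsd \<le> 1*fsd" "pq*fsd \<le> 1*fsd" using prm by (intro mult_right_mono; simp)+
  moreover have "fsd < 1" "0 < fsd" "0 < pq" "pq < 1" using prm by auto
  ultimately show "e < 1" "c < 1" by linarith+
  show "0 < e" "0 < c" using prm by auto
  show "0 \<le> lp*mu" "0 \<le> ls * c" "0 \<le> lp * g" using prm m0 by (auto intro!: mult_nonneg_nonneg)
qed

lemma bnds: "0 \<le> g" "g \<le> 1" "0 \<le> mu" "mu \<le> 1" "0 \<le> c" "c \<le> 1" "0 \<le> e" "e \<le> 1"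
  "0 \<le> lp" "lp \<le> 1" "0 \<le> ls" "ls \<le> 1"
  using par prm by auto

lemma D_Suc: "D (Suc t) = bind_pmf (D t) S"
  by (simp add: state_dist_def)
lemma D_0: "D 0 = return_pmf (0,0,0)"
  by (simp add: state_dist_def)

lemma fin_slot: "finite (set_pmf (S x))"
proof -
  obtain a b c where x: "x = (a,b,c)" by (cases x) auto
  have "set_pmf (S x) \<subseteq> {..a+1} \<times> {..b+1} \<times> {..c+1}"
    unfolding x slot_def by (auto simp: Let_def split: if_splits)
  thus ?thesis by (rule finite_subset) auto
qed



definition H1 :: "(qstate \<Rightarrow> real) \<Rightarrow> nat \<Rightarrow> nat \<Rightarrow> nat \<Rightarrow> real" where
  "H1 f qp qsp qs = fpd*f(qp-1,qsp,qs) + (1-fpd)*(fps*(pa*f(qp-1,qsp+1,qs) + (1-pa)*f(qp,qsp,qs)) + (1-fps)*f(qp,qsp,qs))"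

definition H0 :: "(qstate \<Rightarrow> real) \<Rightarrow> nat \<Rightarrow> nat \<Rightarrow> nat \<Rightarrow> real" where
  "H0 f a qsp qs = ls*(pq*(fsd*f(a,qsp,qs - (if 0<qs then 1 else 0) + 1) + (1-fsd)*f(a,qsp,qs+1))
     + (1-pq)*(fsd*f(a,qsp - (if 0<qsp then 1 else 0),qs+1) + (1-fsd)*f(a,qsp,qs+1)))
   + (1-ls)*(pq*(fsd*f(a,qsp,qs - (if 0<qs then 1 else 0)) + (1-fsd)*f(a,qsp,qs))
     + (1-pq)*(fsd*f(a,qsp-(if 0<qsp then 1 else 0),qs) + (1-fsd)*f(a,qsp,qs)))"

lemma G1:
  fixes f :: "qstate \<Rightarrow> real"
  assumes "qp > 0"
  shows "ES (qp,qsp,qs) f = lp*(ls*H1 f (qp+1) qsp (qs+1) + (1-ls)*H1 f (qp+1) qsp qs)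
     + (1-lp)*(ls*H1 f qp qsp (qs+1) + (1-ls)*H1 f qp qsp qs)"
  using prm assms unfolding slot_def H1_def
  by (simp add: E_bern Let_def)

lemma G0:
  fixes f :: "qstate \<Rightarrow> real"
  shows "ES (0,qsp,qs) f = lp*H0 f 1 qsp qs + (1-lp)*H0 f 0 qsp qs"
  using prm unfolding slot_def H0_def
  by (simp add: E_bern Let_def)

lemma S1:
  fixes \<phi> :: "nat \<Rightarrow> real"
  assumes "qp > 0"
  shows "ES (qp,qsp,qs) (\<lambda>y. \<phi> (Q_p y)) =
    lp*(mu*\<phi> qp + (1-mu)*\<phi>(qp+1)) + (1-lp)*(mu*\<phi>(qp-1) + (1-mu)*\<phi> qp)"
  using assms by (simp add: G1 H1_def Q_p_def Q_s_def Q_sp_def algebra_simps)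

lemma S2:
  fixes \<phi> :: "nat \<Rightarrow> real"
  shows "ES (0,qsp,qs) (\<lambda>y. \<phi> (Q_p y)) = lp*\<phi> 1 + (1-lp)*\<phi> 0"
  by (simp add: G0 H0_def Q_p_def Q_s_def Q_sp_def algebra_simps)

lemma S3:
  fixes \<phi> :: "nat \<Rightarrow> real"
  assumes "qp > 0"
  shows "ES (qp,qsp,qs) (\<lambda>y. \<phi> (Q_s y)) = ls*\<phi>(qs+1) + (1-ls)*\<phi> qs"
  using assms by (simp add: G1 H1_def Q_p_def Q_s_def Q_sp_def algebra_simps)

lemma S4a:
  fixes \<phi> :: "nat \<Rightarrow> real"
  assumes "qs > 0"
  shows "ES (0,qsp,qs) (\<lambda>y. \<phi> (Q_s y)) =
     ls*(c*\<phi> qs + (1-c)*\<phi>(qs+1)) + (1-ls)*(c*\<phi>(qs-1) + (1-c)*\<phi> qs)"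
  using assms by (simp add: G0 H0_def Q_p_def Q_s_def Q_sp_def algebra_simps)

lemma S4b:
  fixes \<phi> :: "nat \<Rightarrow> real"
  shows "ES (0,qsp,0) (\<lambda>y. \<phi> (Q_s y)) = ls*\<phi> 1 + (1-ls)*\<phi> 0"
  by (simp add: G0 H0_def Q_p_def Q_s_def Q_sp_def algebra_simps)

lemma S5:
  fixes \<phi> :: "nat \<Rightarrow> real"
  assumes "qp > 0"
  shows "ES (qp,qsp,qs) (\<lambda>y. \<phi> (Q_sp y)) = g*\<phi>(qsp+1) + (1-g)*\<phi> qsp"
  using assms by (simp add: G1 H1_def Q_p_def Q_s_def Q_sp_def algebra_simps)

lemma S6a:
  fixes \<phi> :: "nat \<Rightarrow> real"
  assumes "qsp > 0"
  shows "ES (0,qsp,qs) (\<lambda>y. \<phi> (Q_sp y)) = e*\<phi>(qsp-1) + (1-e)*\<phi> qsp"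
  using assms by (simp add: G0 H0_def Q_p_def Q_s_def Q_sp_def algebra_simps)

lemma S6b:
  fixes \<phi> :: "nat \<Rightarrow> real"
  shows "ES (0,0,qs) (\<lambda>y. \<phi> (Q_sp y)) = \<phi> 0"
  by (simp add: G0 H0_def Q_p_def Q_s_def Q_sp_def algebra_simps)

lemma T1:
  fixes \<psi> \<eta> :: "nat \<Rightarrow> real"
  assumes "qp > 0"
  shows "ES (qp,qsp,qs) (\<lambda>y. \<psi> (Q_p y) * \<eta> (Q_s y)) =
    (lp*(mu*\<psi> qp + (1-mu)*\<psi>(qp+1)) + (1-lp)*(mu*\<psi>(qp-1) + (1-mu)*\<psi> qp)) *
    (ls*\<eta>(qs+1) + (1-ls)*\<eta> qs)"
  using assms by (simp add: G1 H1_def Q_p_def Q_s_def Q_sp_def algebra_simps)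

lemma T2:
  fixes \<psi> \<eta> :: "nat \<Rightarrow> real"
  assumes "qs > 0"
  shows "ES (0,qsp,qs) (\<lambda>y. \<psi> (Q_p y) * \<eta> (Q_s y)) =
    (lp*\<psi> 1 + (1-lp)*\<psi> 0) * (ls*(c*\<eta> qs + (1-c)*\<eta>(qs+1)) + (1-ls)*(c*\<eta>(qs-1) + (1-c)*\<eta> qs))"
  using assms by (simp add: G0 H0_def Q_p_def Q_s_def Q_sp_def algebra_simps)

lemma T3:
  fixes \<psi> \<eta> :: "nat \<Rightarrow> real"
  shows "ES (0,qsp,0) (\<lambda>y. \<psi> (Q_p y) * \<eta> (Q_s y)) =
    (lp*\<psi> 1 + (1-lp)*\<psi> 0) * (ls*\<eta> 1 + (1-ls)*\<eta> 0)"
  by (simp add: G0 H0_def Q_p_def Q_s_def Q_sp_def algebra_simps)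

lemma U1:
  fixes \<psi> \<eta> :: "nat \<Rightarrow> real"
  assumes "qp > 0"
  shows "ES (qp,qsp,qs) (\<lambda>y. \<psi> (Q_p y) * \<eta> (Q_sp y)) =
    lp*(fpd*\<psi> qp*\<eta> qsp + g*\<psi> qp*\<eta>(qsp+1) + (1-mu)*\<psi>(qp+1)*\<eta> qsp)
    + (1-lp)*(fpd*\<psi>(qp-1)*\<eta> qsp + g*\<psi>(qp-1)*\<eta>(qsp+1) + (1-mu)*\<psi> qp*\<eta> qsp)"
  using assms by (simp add: G1 H1_def Q_p_def Q_s_def Q_sp_def algebra_simps)

lemma U2:
  fixes \<psi> \<eta> :: "nat \<Rightarrow> real"
  assumes "qsp > 0"
  shows "ES (0,qsp,qs) (\<lambda>y. \<psi> (Q_p y) * \<eta> (Q_sp y)) =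
    (lp*\<psi> 1 + (1-lp)*\<psi> 0) * (e*\<eta>(qsp-1) + (1-e)*\<eta> qsp)"
  using assms by (simp add: G0 H0_def Q_p_def Q_s_def Q_sp_def algebra_simps)

lemma U3:
  fixes \<psi> \<eta> :: "nat \<Rightarrow> real"
  shows "ES (0,0,qs) (\<lambda>y. \<psi> (Q_p y) * \<eta> (Q_sp y)) = (lp*\<psi> 1 + (1-lp)*\<psi> 0) * \<eta> 0"
  by (simp add: G0 H0_def Q_p_def Q_s_def Q_sp_def algebra_simps)


lemma E_abs:
  fixes f :: "'a \<Rightarrow> real" assumes "\<And>y. \<bar>f y\<bar> \<le> B"
  shows "\<bar>measure_pmf.expectation M f\<bar> \<le> B"
proof -
  have B0: "0 \<le> B" using assms[of undefined] abs_ge_zero[of "f undefined"] by linarith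
  have "\<bar>measure_pmf.expectation M f\<bar> \<le> measure_pmf.expectation M (\<lambda>y. \<bar>f y\<bar>)"
    by (rule integral_abs_bound)
  also have "\<dots> \<le> measure_pmf.expectation M (\<lambda>y. B)"
    using assms B0 by (intro integral_mono int_bdd[where B=B]) auto
  also have "\<dots> = B" using B0 by simp
  finally show ?thesis .
qed

lemma E_ind: "measure_pmf.expectation M (indicator A :: _ \<Rightarrow> real) = measure_pmf.prob M A"
  by simp

lemma tele_ge:
  fixes f r :: "qstate \<Rightarrow> real"
  assumes fb: "\<And>y. \<bar>f y\<bar> \<le> B" and rb: "\<And>y. \<bar>r y\<bar> \<le> B'"
    and dr: "\<And>x. r x \<le> ES x f - f x"
  shows "f (0,0,0) + (\<Sum>t<n. measure_pmf.expectation (D t) r) \<le> measure_pmf.expectation (D n) f"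
proof (induction n)
  case 0 show ?case by (simp add: D_0)
next
  case (Suc n)
  have b2: "\<And>x. \<bar>ES x f\<bar> \<le> B" by (rule E_abs[OF fb])
  have "f (0,0,0) + (\<Sum>t<Suc n. measure_pmf.expectation (D t) r)
      \<le> measure_pmf.expectation (D n) f + measure_pmf.expectation (D n) r" using Suc by simp
  also have "\<dots> = measure_pmf.expectation (D n) (\<lambda>x. f x + r x)"
    by (simp add: Bochner_Integration.integral_add[OF int_bdd[where f=f, OF fb] int_bdd[where f=r, OF rb]])
  also have "\<dots> \<le> measure_pmf.expectation (D n) (\<lambda>x. ES x f)"
  proof (rule integral_mono)
    show "integrable (measure_pmf (D n)) (\<lambda>x. f x + r x)"
      by (intro Bochner_Integration.integrable_add int_bdd[where f=f, OF fb] int_bdd[where f=r, OF rb])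
    show "integrable (measure_pmf (D n)) (\<lambda>x. ES x f)" by (rule int_bdd[OF b2])
    fix x show "f x + r x \<le> ES x f" using dr[of x] by linarith
  qed
  also have "\<dots> = measure_pmf.expectation (D (Suc n)) f" by (simp add: D_Suc E_bind_bdd[OF fb])
  finally show ?case .
qed

lemma minK:
  fixes q K :: nat
  shows "q < K \<Longrightarrow> min (q+1) K = q+1" "q < K \<Longrightarrow> min q K = q" "q \<le> K \<Longrightarrow> min (q-1) K = q-1"
    "K \<le> q \<Longrightarrow> min q K = K" "K \<le> q \<Longrightarrow> min (q+1) K = K" "K < q \<Longrightarrow> min (q-1) K = K"
  by auto

lemma L2:
  assumes K: "1 \<le> K"
  shows "lp + (-mu) * indicator {y. 0 < Q_p y} x + (-lp) * indicator {y. K \<le> Q_p y} x + 0 * indicator {} x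
     \<le> ES x (\<lambda>y. real (min (Q_p y) K)) - real (min (Q_p x) K)"
proof -
  obtain qp qsp qs where x: "x = (qp,qsp,qs)" by (cases x) auto
  show ?thesis
  proof (cases "qp = 0")
    case True
    then show ?thesis using S2[where \<phi>="\<lambda>n. real (min n K)" and qsp=qsp and qs=qs] K prm unfolding x
      by (simp add: Q_p_def)
  next
    case False
    hence q: "0 < qp" by simp
    have E: "ES x (\<lambda>y. real (min (Q_p y) K)) = lp*(mu*real (min qp K) + (1-mu)*real (min (qp+1) K)) + (1-lp)*(mu*real (min (qp-1) K) + (1-mu)*real (min qp K))"
      unfolding x by (rule S1[OF q])
    consider "qp < K" | "qp = K" | "K < qp" by linarith
    then show ?thesis
    proof cases
      case 1
      hence "ES x (\<lambda>y. real (min (Q_p y) K)) = real qp + lp - mu" using q unfolding E by (simp add: minK of_nat_diff algebra_simps)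
      then show ?thesis using 1 q by (simp add: x Q_p_def)
    next
      case 2
      hence "ES x (\<lambda>y. real (min (Q_p y) K)) = real qp - (1-lp)*mu" using q unfolding E by (simp add: minK of_nat_diff algebra_simps)
      then show ?thesis using 2 q par by (simp add: x Q_p_def algebra_simps)
    next
      case 3
      hence "ES x (\<lambda>y. real (min (Q_p y) K)) = real K" using q unfolding E by (simp add: minK algebra_simps)
      then show ?thesis using 3 q par prm by (simp add: x Q_p_def; linarith)
    qed
  qed
qed

lemma L3:
  assumes K: "1 \<le> K"
  shows "ls + (-c) * indicator {y. Q_p y = 0 \<and> 0 < Q_s y} x + (-ls) * indicator {y. K \<le> Q_s y} x + 0 * indicator {} x
     \<le> ES x (\<lambda>y. real (min (Q_s y) K)) - real (min (Q_s x) K)"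
proof -
  obtain qp qsp qs where x: "x = (qp,qsp,qs)" by (cases x) auto
  consider "0 < qp" | "qp = 0" "qs = 0" | "qp = 0" "0 < qs" by auto
  then show ?thesis
  proof cases
    case 1
    note q1 = this
    have E: "ES x (\<lambda>y. real (min (Q_s y) K)) = ls*real (min (qs+1) K) + (1-ls)*real (min qs K)"
      unfolding x by (rule S3[OF q1])
    show ?thesis
    proof (cases "qs < K")
      case True
      hence "ES x (\<lambda>y. real (min (Q_s y) K)) = real qs + ls" unfolding E by (simp add: minK algebra_simps)
      then show ?thesis using True q1 by (simp add: x Q_p_def Q_s_def min_def)
    next
      case False
      hence "ES x (\<lambda>y. real (min (Q_s y) K)) = real K" unfolding E by (simp add: minK algebra_simps)
      then show ?thesis using False q1 by (simp add: x Q_p_def Q_s_def min_def)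
    qed
  next
    case 2
    have E: "ES x (\<lambda>y. real (min (Q_s y) K)) = ls*real (min 1 K) + (1-ls)*real (min 0 K)"
      unfolding x 2 by (rule S4b)
    show ?thesis using K 2 unfolding E by (simp add: x Q_p_def Q_s_def)
  next
    case 3
    note q3 = this
    have E: "ES x (\<lambda>y. real (min (Q_s y) K)) = ls*(c*real (min qs K) + (1-c)*real(min (qs+1) K)) + (1-ls)*(c*real (min (qs-1) K) + (1-c)*real (min qs K))"
      unfolding x q3(1) by (rule S4a[OF q3(2)])
    consider "qs < K" | "qs = K" | "K < qs" by linarith
    then show ?thesis
    proof cases
      case 1
      have qk: "qs - 1 \<le> K" using 1 by arith
      have "ES x (\<lambda>y. real (min (Q_s y) K)) = real qs + ls - c" using 1 qk q3 unfolding E by (simp add: minK of_nat_diff algebra_simps)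
      then show ?thesis using 1 q3 by (simp add: x Q_p_def Q_s_def)
    next
      case 2
      hence "ES x (\<lambda>y. real (min (Q_s y) K)) = real qs - (1-ls)*c" using q3 unfolding E by (simp add: minK of_nat_diff algebra_simps)
      then show ?thesis using 2 q3 par by (simp add: x Q_p_def Q_s_def algebra_simps)
    next
      case 3
      hence "ES x (\<lambda>y. real (min (Q_s y) K)) = real K" using q3 unfolding E by (simp add: minK algebra_simps)
      then show ?thesis using 3 q3 par by (simp add: x Q_p_def Q_s_def)
    qed
  qed
qed

lemma L4:
  assumes K: "1 \<le> K"
  shows "g + (-g) * indicator {y. Q_p y = 0} x + (-e) * indicator {y. Q_p y = 0 \<and> 0 < Q_sp y} x + (-g) * indicator {y. K \<le> Q_sp y} x
     \<le> ES x (\<lambda>y. real (min (Q_sp y) K)) - real (min (Q_sp x) K)"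
proof -
  obtain qp qsp qs where x: "x = (qp,qsp,qs)" by (cases x) auto
  consider "0 < qp" | "qp = 0" "qsp = 0" | "qp = 0" "0 < qsp" by auto
  then show ?thesis
  proof cases
    case 1
    note q1 = this
    have E: "ES x (\<lambda>y. real (min (Q_sp y) K)) = g*real (min (qsp+1) K) + (1-g)*real (min qsp K)"
      unfolding x by (rule S5[OF q1])
    show ?thesis
    proof (cases "qsp < K")
      case True
      hence "ES x (\<lambda>y. real (min (Q_sp y) K)) = real qsp + g" unfolding E by (simp add: minK algebra_simps)
      then show ?thesis using True q1 by (simp add: x Q_p_def Q_sp_def min_def)
    next
      case False
      hence "ES x (\<lambda>y. real (min (Q_sp y) K)) = real K" unfolding E by (simp add: minK algebra_simps)
      then show ?thesis using False q1 by (simp add: x Q_p_def Q_sp_def min_def)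
    qed
  next
    case 2
    have E: "ES x (\<lambda>y. real (min (Q_sp y) K)) = real (min 0 K)"
      unfolding x 2 by (rule S6b)
    show ?thesis using K 2 unfolding E by (simp add: x Q_p_def Q_sp_def)
  next
    case 3
    note q3 = this
    have E: "ES x (\<lambda>y. real (min (Q_sp y) K)) = e*real (min (qsp-1) K) + (1-e)*real (min qsp K)"
      unfolding x q3(1) by (rule S6a[OF q3(2)])
    consider "qsp < K" | "qsp = K" | "K < qsp" by linarith
    then show ?thesis
    proof cases
      case 1
      have qk: "qsp - 1 \<le> K" using 1 by arith
      have "ES x (\<lambda>y. real (min (Q_sp y) K)) = real qsp - e" using 1 qk q3 unfolding E by (simp add: minK of_nat_diff algebra_simps)
      then show ?thesis using 1 q3 by (simp add: x Q_p_def Q_sp_def)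
    next
      case 2
      hence "ES x (\<lambda>y. real (min (Q_sp y) K)) = real qsp - e" using q3 unfolding E by (simp add: minK of_nat_diff algebra_simps)
      then show ?thesis using 2 q3 par by (simp add: x Q_p_def Q_sp_def algebra_simps)
    next
      case 3
      hence "ES x (\<lambda>y. real (min (Q_sp y) K)) = real K" using q3 unfolding E by (simp add: minK algebra_simps)
      then show ?thesis using 3 q3 par by (simp add: x Q_p_def Q_sp_def)
    qed
  qed
qed


definition dec :: "qstate \<Rightarrow> qstate" where
  "dec x = (case x of (qp,qsp,qs) \<Rightarrow> if 0 < qp then (qp-1,qsp,qs) else if 0 < qs then (0,qsp,qs-1)
      else if 0 < qsp then (0,qsp-1,0) else (0,0,0))"

lemma dec_pow: "qp + qsp + qs \<le> n \<Longrightarrow> (dec ^^ n) (qp,qsp,qs) = (0,0,0)"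
proof (induction n arbitrary: qp qsp qs)
  case 0 thus ?case by simp
next
  case (Suc n)
  obtain a b d where ab: "dec (qp,qsp,qs) = (a,b,d)" by (cases "dec (qp,qsp,qs)") auto
  have "a + b + d \<le> n" using Suc.prems ab by (auto simp: dec_def split: if_splits)
  hence IH: "(dec ^^ n) (a,b,d) = (0,0,0)" by (rule Suc.IH)
  have "(dec ^^ Suc n) (qp,qsp,qs) = (dec ^^ n) (dec (qp,qsp,qs))" by (simp only: funpow_Suc_right comp_def)
  thus ?case using IH ab by simp
qed

definition c0 where "c0 = (1-lp)*(1-ls)*min fpd (min c e)"

lemma c0_nonneg: "0 \<le> c0"
  using prm par unfolding c0_def by (auto intro!: mult_nonneg_nonneg)

lemma c0_pos: "lp < 1 \<Longrightarrow> ls < 1 \<Longrightarrow> 0 < c0"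
  using prm par unfolding c0_def by (auto intro!: mult_pos_pos)

lemma pmf_as_E: "pmf M y = measure_pmf.expectation M (indicator {y})"
  by (simp add: measure_pmf_single)

lemma slot_dec: "c0 \<le> pmf (S x) (dec x)"
proof -
  obtain qp qsp qs where x: "x = (qp,qsp,qs)" by (cases x) auto
  have ab: "0 \<le> (1-lp)*(1-ls)" using prm by auto
  have m1: "min fpd (min c e) \<le> fpd" "min fpd (min c e) \<le> c" "min fpd (min c e) \<le> e" "min fpd (min c e) \<le> 1"
    using prm by auto
  consider "0 < qp" | "qp = 0" "0 < qs" | "qp = 0" "qs = 0" "0 < qsp" | "qp = 0" "qs = 0" "qsp = 0" by auto
  then show ?thesis
  proof cases
    case 1
    have hq: "qp - Suc 0 \<noteq> qp" "qp - Suc 0 \<noteq> Suc qp" "Suc qp \<noteq> qp - Suc 0" "qp \<noteq> qp - Suc 0" using 1 by auto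
    have "pmf (S x) (dec x) = (1-lp)*((1-ls)*fpd)"
      unfolding x pmf_as_E G1[OF 1] using 1 hq by (simp add: H1_def dec_def indicator_def)
    thus ?thesis using mult_left_mono[OF m1(1) ab] by (simp add: c0_def)
  next
    case 2
    have hq: "qs - Suc 0 \<noteq> qs" "qs - Suc 0 \<noteq> Suc qs" "Suc qs \<noteq> qs - Suc 0" "qs \<noteq> qs - Suc 0" using 2 by auto
    have "pmf (S x) (dec x) = (1-lp)*((1-ls)*(pq*fsd))"
      unfolding x pmf_as_E 2(1) G0 using 2 hq by (simp add: H0_def dec_def indicator_def)
    thus ?thesis using mult_left_mono[OF m1(2) ab] by (simp add: c0_def)
  next
    case 3
    have hq: "qsp - Suc 0 \<noteq> qsp" "qsp - Suc 0 \<noteq> Suc qsp" "Suc qsp \<noteq> qsp - Suc 0" "qsp \<noteq> qsp - Suc 0" using 3 by auto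
    have "pmf (S x) (dec x) = (1-lp)*((1-ls)*((1-pq)*fsd))"
      unfolding x pmf_as_E 3(1,2) G0 using 3 hq by (simp add: H0_def dec_def indicator_def)
    thus ?thesis using mult_left_mono[OF m1(3) ab] by (simp add: c0_def)
  next
    case 4
    have "pmf (S x) (dec x) = (1-lp)*(1-ls)"
      unfolding x pmf_as_E 4 G0 by (simp add: H0_def dec_def indicator_def algebra_simps)
    thus ?thesis using mult_left_mono[OF m1(4) ab] by (simp add: c0_def)
  qed
qed

lemma step_ge: "c0 * measure_pmf.prob (D t) {x. dec x \<in> A} \<le> measure_pmf.prob (D (Suc t)) A"
proof -
  have ib: "\<And>y. \<bar>indicator A y :: real\<bar> \<le> 1" by (simp split: split_indicator)
  have "c0 * measure_pmf.prob (D t) {x. dec x \<in> A}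
      = measure_pmf.expectation (D t) (\<lambda>x. c0 * indicator {x. dec x \<in> A} x)" by simp
  also have "\<dots> \<le> measure_pmf.expectation (D t) (\<lambda>x. ES x (indicator A))"
  proof (rule integral_mono)
    show "integrable (measure_pmf (D t)) (\<lambda>x. c0 * indicator {x. dec x \<in> A} x)"
      by (rule measure_pmf.integrable_const_bound[where B="\<bar>c0\<bar>"]) (auto split: split_indicator)
    show "integrable (measure_pmf (D t)) (\<lambda>x. ES x (indicator A :: qstate \<Rightarrow> real))"
      by (rule int_bdd[where f="\<lambda>x. ES x (indicator A)" and B=1]) (rule E_abs[OF ib])
    fix x
    show "c0 * indicator {x. dec x \<in> A} x \<le> ES x (indicator A)"
    proof (cases "dec x \<in> A")
      case True
      have "c0 \<le> pmf (S x) (dec x)" by (rule slot_dec)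
      also have "\<dots> = measure_pmf.prob (S x) {dec x}" by (simp add: measure_pmf_single)
      also have "\<dots> \<le> measure_pmf.prob (S x) A" using True by (intro measure_pmf.finite_measure_mono) auto
      finally show ?thesis using True by simp
    qed simp
  qed
  also have "\<dots> = measure_pmf.expectation (D (Suc t)) (indicator A)"
    unfolding D_Suc by (rule E_bind_bdd[OF ib, symmetric])
  also have "\<dots> = measure_pmf.prob (D (Suc t)) A" by simp
  finally show ?thesis .
qed

lemma iter_ge: "c0 ^ m * measure_pmf.prob (D t) {x. (dec ^^ m) x \<in> A} \<le> measure_pmf.prob (D (t + m)) A"
proof (induction m arbitrary: A)
  case 0 show ?case by simp
next
  case (Suc m)
  have "c0 ^ Suc m * measure_pmf.prob (D t) {x. (dec ^^ Suc m) x \<in> A}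
      = c0 * (c0 ^ m * measure_pmf.prob (D t) {x. (dec ^^ m) x \<in> {x. dec x \<in> A}})" by simp
  also have "\<dots> \<le> c0 * measure_pmf.prob (D (t+m)) {x. dec x \<in> A}"
    using Suc.IH[of "{x. dec x \<in> A}"] c0_nonneg by (intro mult_left_mono) auto
  also have "\<dots> \<le> measure_pmf.prob (D (Suc (t+m))) A" by (rule step_ge)
  finally show ?case by simp
qed

lemma stab_from_V:
  fixes V :: "qstate \<Rightarrow> real" and q :: "qstate \<Rightarrow> nat"
  assumes V0: "\<And>y. 0 \<le> V y" and Vq: "\<And>y. base ^ q y \<le> V y" and base: "1 < base"
    and dr: "\<And>x. ES x V \<le> \<rho> * V x + b" and r0: "0 \<le> \<rho>" and r1: "\<rho> < 1" and b0: "0 \<le> b"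
  shows "queue_stable D q"
proof -
  define C where "C = max (V (0,0,0)) (b / (1-\<rho>))"
  have "1 \<le> base ^ q (0,0,0)" using base by simp
  hence C0: "1 \<le> C" using Vq[of "(0,0,0)"] by (simp add: C_def le_max_iff_disj)
  have CC: "\<rho> * C + b \<le> C"
  proof -
    have "b / (1-\<rho>) \<le> C" by (simp add: C_def)
    hence "b \<le> C * (1-\<rho>)" using r1 by (simp add: pos_divide_le_eq)
    thus ?thesis by (simp add: algebra_simps)
  qed
  have nnS: "\<And>x. (\<integral>\<^sup>+y. ennreal (V y) \<partial>S x) = ennreal (ES x V)"
    by (rule nn_integral_eq_integral) (auto intro: integrable_measure_pmf_finite fin_slot V0)
  have bound: "(\<integral>\<^sup>+y. ennreal (V y) \<partial>D t) \<le> ennreal C" for t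
  proof (induction t)
    case 0 show ?case by (simp add: D_0 C_def ennreal_leI)
  next
    case (Suc t)
    have pw: "ennreal (ES x V) \<le> ennreal \<rho> * ennreal (V x) + ennreal b" for x
    proof -
      have "ennreal (ES x V) \<le> ennreal (\<rho> * V x + b)" by (rule ennreal_leI) (rule dr)
      also have "\<dots> = ennreal \<rho> * ennreal (V x) + ennreal b"
        using r0 V0[of x] b0 by (simp add: ennreal_plus ennreal_mult)
      finally show ?thesis .
    qed
    have "(\<integral>\<^sup>+y. ennreal (V y) \<partial>D (Suc t)) = (\<integral>\<^sup>+x. ennreal (ES x V) \<partial>D t)"
      by (simp add: D_Suc nnS)
    also have "\<dots> \<le> (\<integral>\<^sup>+x. ennreal \<rho> * ennreal (V x) + ennreal b \<partial>D t)"
      by (intro nn_integral_mono pw)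
    also have "\<dots> = ennreal \<rho> * (\<integral>\<^sup>+x. ennreal (V x) \<partial>D t) + ennreal b"
      by (simp add: nn_integral_add nn_integral_cmult measure_pmf.emeasure_space_1)
    also have "\<dots> \<le> ennreal \<rho> * ennreal C + ennreal b"
      using Suc.IH by (intro add_mono mult_left_mono) auto
    also have "\<dots> = ennreal (\<rho> * C + b)" using r0 C0 b0 by (simp add: ennreal_mult ennreal_plus)
    also have "\<dots> \<le> ennreal C" using CC by (rule ennreal_leI)
    finally show ?case .
  qed
  have tail: "base ^ (M+1) * measure_pmf.prob (D t) {y. M < q y} \<le> C" for M t
  proof -
    let ?A = "{y. M < q y}"
    have "ennreal (base ^ (M+1)) * emeasure (D t) ?A = (\<integral>\<^sup>+y. ennreal (base^(M+1)) * indicator ?A y \<partial>D t)"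
      by (simp add: nn_integral_cmult_indicator)
    also have "\<dots> \<le> (\<integral>\<^sup>+y. ennreal (V y) \<partial>D t)"
    proof (rule nn_integral_mono)
      fix y
      show "ennreal (base^(M+1)) * indicator ?A y \<le> ennreal (V y)"
      proof (cases "y \<in> ?A")
        case True
        hence "base^(M+1) \<le> base ^ q y" using base by (intro power_increasing) auto
        also have "\<dots> \<le> V y" by (rule Vq)
        finally show ?thesis using True by (simp add: ennreal_leI)
      qed simp
    qed
    also have "\<dots> \<le> ennreal C" by (rule bound)
    finally have "ennreal (base ^ (M+1) * measure_pmf.prob (D t) ?A) \<le> ennreal C"
      using base by (simp add: measure_pmf.emeasure_eq_measure ennreal_mult)
    thus ?thesis using C0 by (simp add: ennreal_le_iff)
  qed
  show ?thesis unfolding queue_stable_def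
  proof (intro allI impI)
    fix \<epsilon> :: real assume \<epsilon>: "0 < \<epsilon>"
    obtain n where n: "C / \<epsilon> < base ^ n" using real_arch_pow[OF base] by blast
    show "\<exists>M. \<forall>t. measure_pmf.prob (D t) {s. M < q s} < \<epsilon>"
    proof (intro exI allI)
      fix t
      have p: "base^(n+1) * measure_pmf.prob (D t) {s. n < q s} \<le> C" by (rule tail)
      have "base^n \<le> base^(n+1)" using base by (intro power_increasing) auto
      hence "C / \<epsilon> < base^(n+1)" using n by linarith
      hence "C < base^(n+1) * \<epsilon>" using \<epsilon> by (simp add: divide_less_eq)
      hence "base^(n+1) * measure_pmf.prob (D t) {s. n < q s} < base^(n+1) * \<epsilon>" using p by linarith
      moreover have "0 < base^(n+1)" using base by simp
      ultimately show "measure_pmf.prob (D t) {s. n < q s} < \<epsilon>"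
        using mult_less_cancel_left_pos[of "base^(n+1)" "measure_pmf.prob (D t) {s. n < q s}" \<epsilon>] by blast
    qed
  qed
qed

definition F1 :: "real \<Rightarrow> real \<Rightarrow> real" where
  "F1 w z = (lp*(mu + (1-mu)*w) + (1-lp)*(mu/w + (1-mu))) * (ls*z + (1-ls))"
definition F2 :: "real \<Rightarrow> real \<Rightarrow> real" where
  "F2 w z = (lp*w + (1-lp)) * (ls*(c + (1-c)*z) + (1-ls)*(c/z + (1-c)))"
definition J1 :: "real \<Rightarrow> real \<Rightarrow> real" where
  "J1 w z = lp*(fpd + g*z + (1-mu)*w) + (1-lp)*(fpd/w + g*z/w + (1-mu))"
definition J2 :: "real \<Rightarrow> real \<Rightarrow> real" where
  "J2 w z = (lp*w + (1-lp)) * (e/z + (1-e))"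

lemma drift_s:
  assumes w: "1 < w" and z: "1 < z"
  shows "ES x (\<lambda>y. w^(Q_p y) * z^(Q_s y)) \<le> max 0 (max (F1 w z) (F2 w z)) * (w^(Q_p x) * z^(Q_s x))
           + (lp*w + (1-lp))*(ls*z + (1-ls))"
proof -
  obtain qp qsp qs where x: "x = (qp,qsp,qs)" by (cases x) auto
  let ?\<rho> = "max 0 (max (F1 w z) (F2 w z))"
  have b0: "0 \<le> (lp*w + (1-lp))*(ls*z + (1-ls))" using prm w z by (intro mult_nonneg_nonneg) auto
  have Vx: "0 \<le> w^qp * z^qs" using w z by simp
  consider "0 < qp" | "qp = 0" "0 < qs" | "qp = 0" "qs = 0" by auto
  then show ?thesis
  proof cases
    case 1
    then obtain k where k: "qp = Suc k" using gr0_conv_Suc by auto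
    have "ES x (\<lambda>y. w^(Q_p y) * z^(Q_s y)) = (lp*(mu*w^qp + (1-mu)*w^(qp+1)) + (1-lp)*(mu*w^(qp-1) + (1-mu)*w^qp)) *
    (ls*z^(qs+1) + (1-ls)*z^qs)"
      unfolding x by (rule T1[OF 1])
    also have "\<dots> = F1 w z * (w^qp * z^qs)"
      using w by (simp add: k F1_def field_simps)
    also have "\<dots> \<le> ?\<rho> * (w^qp * z^qs)" using Vx by (intro mult_right_mono) auto
    finally show ?thesis using b0 by (simp add: x Q_p_def Q_s_def)
  next
    case 2
    have "ES x (\<lambda>y. w^(Q_p y) * z^(Q_s y)) = (lp*w^1 + (1-lp)*w^0) * (ls*(c*z^qs + (1-c)*z^(qs+1)) + (1-ls)*(c*z^(qs-1) + (1-c)*z^qs))"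
      unfolding x 2(1) by (rule T2[OF 2(2)])
    also have "\<dots> = F2 w z * (z^qs)"
      using z 2(2) by (cases qs) (simp_all add: F2_def field_simps)
    also have "\<dots> \<le> ?\<rho> * (z^qs)" using z by (intro mult_right_mono) auto
    finally show ?thesis using b0 2 by (simp add: x Q_p_def Q_s_def)
  next
    case 3
    have "ES x (\<lambda>y. w^(Q_p y) * z^(Q_s y)) = (lp*w + (1-lp))*(ls*z + (1-ls))"
      unfolding x 3 using T3[where \<psi>="\<lambda>n. w^n" and \<eta>="\<lambda>n. z^n" and qsp=qsp] by (simp del: power_0 power_one_right, simp)
    thus ?thesis using 3 by (simp add: x Q_p_def Q_s_def)
  qed
qed

lemma drift_sp:
  assumes w: "1 < w" and z: "1 < z"
  shows "ES x (\<lambda>y. w^(Q_p y) * z^(Q_sp y)) \<le> max 0 (max (J1 w z) (J2 w z)) * (w^(Q_p x) * z^(Q_sp x))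
           + (lp*w + (1-lp))"
proof -
  obtain qp qsp qs where x: "x = (qp,qsp,qs)" by (cases x) auto
  let ?\<rho> = "max 0 (max (J1 w z) (J2 w z))"
  have b0: "0 \<le> (lp*w + (1-lp))" using prm w z by auto
  have Vx: "0 \<le> w^qp * z^qsp" using w z by simp
  consider "0 < qp" | "qp = 0" "0 < qsp" | "qp = 0" "qsp = 0" by auto
  then show ?thesis
  proof cases
    case 1
    then obtain k where k: "qp = Suc k" using gr0_conv_Suc by auto
    have "ES x (\<lambda>y. w^(Q_p y) * z^(Q_sp y)) = lp*(fpd*w^qp*z^qsp + g*w^qp*z^(qsp+1) + (1-mu)*w^(qp+1)*z^qsp)
    + (1-lp)*(fpd*w^(qp-1)*z^qsp + g*w^(qp-1)*z^(qsp+1) + (1-mu)*w^qp*z^qsp)"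
      unfolding x by (rule U1[OF 1])
    also have "\<dots> = J1 w z * (w^qp * z^qsp)"
      using w by (simp add: k J1_def field_simps)
    also have "\<dots> \<le> ?\<rho> * (w^qp * z^qsp)" using Vx by (intro mult_right_mono) auto
    finally show ?thesis using b0 by (simp add: x Q_p_def Q_sp_def)
  next
    case 2
    have "ES x (\<lambda>y. w^(Q_p y) * z^(Q_sp y)) = (lp*w^1 + (1-lp)*w^0) * (e*z^(qsp-1) + (1-e)*z^qsp)"
      unfolding x 2(1) by (rule U2[OF 2(2)])
    also have "\<dots> = J2 w z * (z^qsp)"
      using z 2(2) by (cases qsp) (simp_all add: J2_def field_simps)
    also have "\<dots> \<le> ?\<rho> * (z^qsp)" using z by (intro mult_right_mono) auto
    finally show ?thesis using b0 2 by (simp add: x Q_p_def Q_sp_def)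
  next
    case 3
    have "ES x (\<lambda>y. w^(Q_p y) * z^(Q_sp y)) = (lp*w + (1-lp))"
      unfolding x 3 using U3[where \<psi>="\<lambda>n. w^n" and \<eta>="\<lambda>n. z^n" and qs=qs] by (simp del: power_0 power_one_right, simp)
    thus ?thesis using 3 by (simp add: x Q_p_def Q_sp_def)
  qed
qed

lemma small_step:
  fixes f1 f2 :: "real \<Rightarrow> real"
  assumes "f1 0 = 1" "f2 0 = 1" "(f1 has_real_derivative d1) (at 0)" "(f2 has_real_derivative d2) (at 0)"
    "d1 < 0" "d2 < 0"
  shows "\<exists>h>0. f1 h < 1 \<and> f2 h < 1"
proof -
  obtain e1 where e1: "e1 > 0" "\<forall>h>0. h < e1 \<longrightarrow> f1 0 > f1 (0 + h)"
    using DERIV_neg_dec_right[OF assms(3,5)] by blast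
  obtain e2 where e2: "e2 > 0" "\<forall>h>0. h < e2 \<longrightarrow> f2 0 > f2 (0 + h)"
    using DERIV_neg_dec_right[OF assms(4,6)] by blast
  define h where "h = min e1 e2 / 2"
  have "h > 0" "h < e1" "h < e2" using e1 e2 by (auto simp: h_def)
  thus ?thesis using e1 e2 assms(1,2) by (intro exI[of _ h]) auto
qed

lemma exists_s:
  assumes "ls*mu < c*(mu-lp)"
  shows "\<exists>w z. 1 < w \<and> 1 < z \<and> F1 w z < 1 \<and> F2 w z < 1"
proof -
  define a where "a = c / mu"
  have a0: "0 < a" using par by (simp add: a_def)
  have d1: "((\<lambda>h. F1 (1+a*h) (1+h)) has_real_derivative (a*(lp-mu)+ls)) (at 0)"
    unfolding F1_def by (auto intro!: derivative_eq_intros simp: algebra_simps)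
  have d2: "((\<lambda>h. F2 (1+a*h) (1+h)) has_real_derivative (a*lp + ls - c)) (at 0)"
    unfolding F2_def by (auto intro!: derivative_eq_intros simp: algebra_simps)
  have n1: "a*(lp-mu)+ls = (ls*mu - c*(mu-lp))/mu" using par by (simp add: a_def field_simps)
  have n2: "a*lp + ls - c = (ls*mu - c*(mu-lp))/mu" using par by (simp add: a_def field_simps)
  have neg: "(ls*mu - c*(mu-lp))/mu < 0" using assms par by (intro divide_neg_pos) auto
  obtain h where h: "h > 0" "F1 (1+a*h) (1+h) < 1" "F2 (1+a*h) (1+h) < 1"
    using small_step[OF _ _ d1 d2] neg n1 n2 by (auto simp: F1_def F2_def)
  thus ?thesis using a0 by (intro exI[of _ "1+a*h"] exI[of _ "1+h"]) auto
qed

lemma exists_sp: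
  assumes "lp*(g+e) < e*mu"
  shows "\<exists>w z. 1 < w \<and> 1 < z \<and> J1 w z < 1 \<and> J2 w z < 1"
proof -
  define a where "a = (g+e) / mu"
  have a0: "0 < a" using par by (simp add: a_def add_nonneg_pos)
  have d1: "((\<lambda>h. J1 (1+a*h) (1+h)) has_real_derivative (g + a*(lp-mu))) (at 0)"
    unfolding J1_def by (auto intro!: derivative_eq_intros simp: algebra_simps)
  have d2: "((\<lambda>h. J2 (1+a*h) (1+h)) has_real_derivative (a*lp - e)) (at 0)"
    unfolding J2_def by (auto intro!: derivative_eq_intros simp: algebra_simps)
  have n1: "g + a*(lp-mu) = (lp*(g+e) - e*mu)/mu" using par by (simp add: a_def field_simps)
  have n2: "a*lp - e = (lp*(g+e) - e*mu)/mu" using par by (simp add: a_def field_simps)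
  have neg: "(lp*(g+e) - e*mu)/mu < 0" using assms par by (intro divide_neg_pos) auto
  obtain h where h: "h > 0" "J1 (1+a*h) (1+h) < 1" "J2 (1+a*h) (1+h) < 1"
    using small_step[OF _ _ d1 d2] neg n1 n2 by (auto simp: J1_def J2_def)
  thus ?thesis using a0 by (intro exI[of _ "1+a*h"] exI[of _ "1+h"]) auto
qed

lemma sufficiency:
  assumes "ls*mu < c*(mu-lp)" "lp*(g+e) < e*mu"
  shows "queue_stable D Q_p \<and> queue_stable D Q_sp \<and> queue_stable D Q_s"
proof -
  obtain w z where wz: "1 < w" "1 < z" "F1 w z < 1" "F2 w z < 1" using exists_s[OF assms(1)] by blast
  obtain w' z' where wz': "1 < w'" "1 < z'" "J1 w' z' < 1" "J2 w' z' < 1" using exists_sp[OF assms(2)] by blast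
  have b0: "0 \<le> (lp*w + (1-lp))*(ls*z + (1-ls))" using prm wz by (intro mult_nonneg_nonneg) auto
  have b0': "0 \<le> (lp*w' + (1-lp))" using prm wz' by auto
  have V0: "0 \<le> w^(Q_p y) * z^(Q_s y)" for y using wz by simp
  have V0': "0 \<le> w'^(Q_p y) * z'^(Q_sp y)" for y using wz' by simp
  have p: "queue_stable D Q_p"
    by (rule stab_from_V[where V="\<lambda>y. w^(Q_p y) * z^(Q_s y)" and base=w, OF V0 _ wz(1) drift_s[OF wz(1,2)] _ _ b0])
       (use wz in \<open>auto intro: mult_left_mono[of 1, simplified] one_le_power\<close>)
  have s: "queue_stable D Q_s"
    by (rule stab_from_V[where V="\<lambda>y. w^(Q_p y) * z^(Q_s y)" and base=z, OF V0 _ wz(2) drift_s[OF wz(1,2)] _ _ b0])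
       (use wz in \<open>auto intro: mult_right_mono[of 1, simplified] one_le_power\<close>)
  have sp: "queue_stable D Q_sp"
    by (rule stab_from_V[where V="\<lambda>y. w'^(Q_p y) * z'^(Q_sp y)" and base=z', OF V0' _ wz'(2) drift_sp[OF wz'(1,2)] _ _ b0'])
       (use wz' in \<open>auto intro: mult_right_mono[of 1, simplified] one_le_power\<close>)
  show ?thesis using p s sp by blast
qed


lemma sum_lin2:
  fixes a b d :: real
  shows "(\<Sum>t<n. a + b * x t + d * y t) = real n * a + b * (\<Sum>t<n. x t) + d * (\<Sum>t<n. y t)"
  by (simp add: sum.distrib sum_distrib_left)

lemma tight:
  assumes "queue_stable D q" "0 < \<epsilon>"
  shows "\<exists>K\<ge>1. \<forall>t. measure_pmf.prob (D t) {y. K \<le> q y} \<le> \<epsilon>"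
proof -
  obtain M :: nat where M: "\<forall>t. measure_pmf.prob (D t) {s. M < q s} < \<epsilon>"
    using assms unfolding queue_stable_def by blast
  have "{y. Suc M \<le> q y} = {s. M < q s}" by auto
  hence "\<forall>t. measure_pmf.prob (D t) {y. Suc M \<le> q y} \<le> \<epsilon>" using M by (simp add: less_imp_le)
  thus ?thesis by (intro exI[of _ "Suc M"]) auto
qed

lemma tight3:
  assumes st: "queue_stable D Q_p" "queue_stable D Q_sp" "queue_stable D Q_s" and \<epsilon>: "0 < \<epsilon>"
  shows "\<exists>K\<ge>1. \<forall>t. measure_pmf.prob (D t) {y. K \<le> Q_p y} \<le> \<epsilon> \<and> measure_pmf.prob (D t) {y. K \<le> Q_sp y} \<le> \<epsilon>
     \<and> measure_pmf.prob (D t) {y. K \<le> Q_s y} \<le> \<epsilon>"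
proof -
  obtain K1 where K1: "K1 \<ge> 1" "\<forall>t. measure_pmf.prob (D t) {y. K1 \<le> Q_p y} \<le> \<epsilon>" using tight[OF st(1) \<epsilon>] by blast
  obtain K2 where K2: "K2 \<ge> 1" "\<forall>t. measure_pmf.prob (D t) {y. K2 \<le> Q_sp y} \<le> \<epsilon>" using tight[OF st(2) \<epsilon>] by blast
  obtain K3 where K3: "K3 \<ge> 1" "\<forall>t. measure_pmf.prob (D t) {y. K3 \<le> Q_s y} \<le> \<epsilon>" using tight[OF st(3) \<epsilon>] by blast
  define K where "K = max K1 (max K2 K3)"
  have mono: "measure_pmf.prob (D t) {y. K \<le> q y} \<le> measure_pmf.prob (D t) {y. K' \<le> q y}" if "K' \<le> K" for K' q t
    using that by (intro measure_pmf.finite_measure_mono) auto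
  have le: "K1 \<le> K" "K2 \<le> K" "K3 \<le> K" "1 \<le> K" using K1 by (auto simp: K_def)
  have "\<forall>t. measure_pmf.prob (D t) {y. K \<le> Q_p y} \<le> \<epsilon> \<and> measure_pmf.prob (D t) {y. K \<le> Q_sp y} \<le> \<epsilon>
     \<and> measure_pmf.prob (D t) {y. K \<le> Q_s y} \<le> \<epsilon>"
  proof
    fix t
    show "measure_pmf.prob (D t) {y. K \<le> Q_p y} \<le> \<epsilon> \<and> measure_pmf.prob (D t) {y. K \<le> Q_sp y} \<le> \<epsilon>
     \<and> measure_pmf.prob (D t) {y. K \<le> Q_s y} \<le> \<epsilon>"
    proof -
      have "measure_pmf.prob (D t) {y. K \<le> Q_p y} \<le> measure_pmf.prob (D t) {y. K1 \<le> Q_p y}"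
           "measure_pmf.prob (D t) {y. K \<le> Q_sp y} \<le> measure_pmf.prob (D t) {y. K2 \<le> Q_sp y}"
           "measure_pmf.prob (D t) {y. K \<le> Q_s y} \<le> measure_pmf.prob (D t) {y. K3 \<le> Q_s y}"
        using le by (auto intro!: measure_pmf.finite_measure_mono)
      thus ?thesis using K1(2) K2(2) K3(2) by (meson order_trans)
    qed
  qed
  thus ?thesis using le(4) by blast
qed

lemma necessity:
  assumes st: "queue_stable D Q_p" "queue_stable D Q_sp" "queue_stable D Q_s"
  shows "ls*mu < c*(mu-lp) \<and> lp*(g+e) < e*mu"
proof -
  define P where "P t A = measure_pmf.prob (D t) A" for t A
  define P0 where "P0 t = P t {y. Q_p y = 0}" for t
  define Z where "Z t = P t {(0,0,0)}" for t
  define PA where "PA t = P t {y. Q_p y = 0 \<and> 0 < Q_s y}" for t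
  define PC where "PC t = P t {y. Q_p y = 0 \<and> 0 < Q_sp y}" for t
  obtain K0 where K0: "K0 \<ge> 1" "\<forall>t. P t {y. K0 \<le> Q_p y} \<le> 1/4 \<and> P t {y. K0 \<le> Q_sp y} \<le> 1/4 \<and> P t {y. K0 \<le> Q_s y} \<le> 1/4"
    using tight3[OF st, of "1/4"] unfolding P_def by auto
  define m where "m = 3*K0"
  define \<beta> where "\<beta> = c0^m / 4"
  have \<beta>0: "0 \<le> \<beta>" using c0_nonneg by (simp add: \<beta>_def)
  have box: "1/4 \<le> P t {x. (dec^^m) x \<in> {(0,0,0)}}" for t
  proof -
    let ?B = "{y. Q_p y < K0 \<and> Q_sp y < K0 \<and> Q_s y < K0}"
    have "P t (UNIV - ?B) \<le> P t ({y. K0 \<le> Q_p y} \<union> {y. K0 \<le> Q_sp y} \<union> {y. K0 \<le> Q_s y})"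
      unfolding P_def by (rule measure_pmf.finite_measure_mono) auto
    also have "\<dots> \<le> P t ({y. K0 \<le> Q_p y} \<union> {y. K0 \<le> Q_sp y}) + P t {y. K0 \<le> Q_s y}"
      unfolding P_def by (rule pmf_sub)
    also have "\<dots> \<le> P t {y. K0 \<le> Q_p y} + P t {y. K0 \<le> Q_sp y} + P t {y. K0 \<le> Q_s y}"
      unfolding P_def by (intro add_right_mono pmf_sub)
    also have "\<dots> \<le> 3/4" using K0(2)[rule_format, of t] by linarith
    finally have c1: "P t (UNIV - ?B) \<le> 3/4" .
    have "P t (UNIV - ?B) = 1 - P t ?B" unfolding P_def by (rule pmf_compl)
    hence B4: "1/4 \<le> P t ?B" using c1 by linarith
    have "?B \<subseteq> {x. (dec^^m) x \<in> {(0,0,0)}}"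
    proof
      fix x assume xB: "x \<in> ?B"
      obtain a b d where x: "x = (a,b,d)" by (cases x) auto
      have "a + b + d \<le> m" using xB by (auto simp: x m_def Q_p_def Q_sp_def Q_s_def)
      hence "(dec^^m) (a,b,d) = (0,0,0)" by (rule dec_pow)
      thus "x \<in> {x. (dec^^m) x \<in> {(0,0,0)}}" by (simp add: x)
    qed
    hence "P t ?B \<le> P t {x. (dec^^m) x \<in> {(0,0,0)}}" unfolding P_def by (rule measure_pmf.finite_measure_mono) auto
    thus ?thesis using B4 by linarith
  qed
  have Zb: "\<beta> \<le> Z (t + m)" for t
  proof -
    have "c0^m * (1/4) \<le> c0^m * P t {x. (dec^^m) x \<in> {(0,0,0)}}" using box c0_nonneg by (intro mult_left_mono) auto
    also have "\<dots> \<le> Z (t+m)" unfolding Z_def P_def by (rule iter_ge)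
    finally show ?thesis by (simp add: \<beta>_def)
  qed
  have Z0: "0 \<le> Z t" for t by (simp add: Z_def P_def)
  have sumZ: "(real n - real m) * \<beta> \<le> (\<Sum>t<n. Z t)" for n
  proof (cases "m \<le> n")
    case False
    hence "(real n - real m) * \<beta> \<le> 0" using \<beta>0 by (intro mult_nonpos_nonneg) auto
    also have "0 \<le> (\<Sum>t<n. Z t)" by (intro sum_nonneg Z0)
    finally show ?thesis .
  next
    case True
    have "(real n - real m) * \<beta> = (\<Sum>t\<in>{m..<n}. \<beta>)" using True by (simp add: of_nat_diff)
    also have "\<dots> \<le> (\<Sum>t\<in>{m..<n}. Z t)"
    proof (rule sum_mono)
      fix t assume t: "t \<in> {m..<n}"
      thus "\<beta> \<le> Z t" using Zb[of "t-m"] by simp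
    qed
    also have "\<dots> \<le> (\<Sum>t<n. Z t)" by (intro sum_mono2) (auto intro: Z0)
    finally show ?thesis .
  qed
  have AZ: "PA t + Z t \<le> P0 t" for t
  proof -
    have "PA t + Z t = P t ({y. Q_p y = 0 \<and> 0 < Q_s y} \<union> {(0,0,0)})"
      unfolding PA_def Z_def P_def by (rule measure_pmf.finite_measure_Union[symmetric]) (auto simp: Q_s_def)
    also have "\<dots> \<le> P0 t" unfolding P0_def P_def by (rule measure_pmf.finite_measure_mono) (auto simp: Q_p_def)
    finally show ?thesis .
  qed
  have CZ: "PC t + Z t \<le> P0 t" for t
  proof -
    have "PC t + Z t = P t ({y. Q_p y = 0 \<and> 0 < Q_sp y} \<union> {(0,0,0)})"
      unfolding PC_def Z_def P_def by (rule measure_pmf.finite_measure_Union[symmetric]) (auto simp: Q_sp_def)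
    also have "\<dots> \<le> P0 t" unfolding P0_def P_def by (rule measure_pmf.finite_measure_mono) (auto simp: Q_p_def)
    finally show ?thesis .
  qed
  have complp: "P t {y. 0 < Q_p y} = 1 - P0 t" for t
  proof -
    have "{y. 0 < Q_p y} = UNIV - {y. Q_p y = 0}" by auto
    thus ?thesis unfolding P_def P0_def by (simp add: pmf_compl)
  qed
  have key: "lp*(1-\<epsilon>) \<le> mu*(1-\<beta>) \<and> mu*ls*(1-\<epsilon>) \<le> c*(mu - lp*(1-\<epsilon>) - mu*\<beta>)
      \<and> mu*g*(1-\<epsilon>) \<le> (g+e)*(mu - lp*(1-\<epsilon>)) - mu*e*\<beta>"
    if \<epsilon>: "0 < \<epsilon>" "\<epsilon> < 1" for \<epsilon>
  proof -
    obtain K where K: "K \<ge> 1" "\<forall>t. P t {y. K \<le> Q_p y} \<le> \<epsilon> \<and> P t {y. K \<le> Q_sp y} \<le> \<epsilon> \<and> P t {y. K \<le> Q_s y} \<le> \<epsilon>"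
      using tight3[OF st \<epsilon>(1)] unfolding P_def by auto
    define SP0 where "SP0 n = (\<Sum>t<n. P0 t)" for n
    define SA where "SA n = (\<Sum>t<n. PA t)" for n
    define SC where "SC n = (\<Sum>t<n. PC t)" for n
    have SAb: "SA n \<le> SP0 n - (real n - real m) * \<beta>" for n
    proof -
      have "SA n + (\<Sum>t<n. Z t) \<le> SP0 n" unfolding SA_def SP0_def sum.distrib[symmetric]
        by (rule sum_mono) (rule AZ)
      thus ?thesis using sumZ[of n] by linarith
    qed
    have SCb: "SC n \<le> SP0 n - (real n - real m) * \<beta>" for n
    proof -
      have "SC n + (\<Sum>t<n. Z t) \<le> SP0 n" unfolding SC_def SP0_def sum.distrib[symmetric]
        by (rule sum_mono) (rule CZ)
      thus ?thesis using sumZ[of n] by linarith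
    qed
    have SPb: "(real n - real m) * \<beta> \<le> SP0 n" for n
    proof -
      have "(\<Sum>t<n. Z t) \<le> SP0 n" unfolding SP0_def
      proof (rule sum_mono)
        fix t have "0 \<le> PA t" by (simp add: PA_def P_def)
        thus "Z t \<le> P0 t" using AZ[of t] by linarith
      qed
      thus ?thesis using sumZ[of n] by linarith
    qed
    have PAnn: "0 \<le> PA t" for t by (simp add: PA_def P_def)
    have I: "real n * (lp - mu - lp*\<epsilon>) + mu * SP0 n \<le> real K" for n
    proof -
      let ?f = "\<lambda>y. real (min (Q_p y) K)"
      let ?r = "\<lambda>x. lp + (-mu) * indicator {y. 0 < Q_p y} x + (-lp) * indicator {y. K \<le> Q_p y} x + 0 * indicator {} x"
      have fb: "\<And>y. \<bar>?f y\<bar> \<le> real K" by simp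
      have rb: "\<And>y. \<bar>?r y\<bar> \<le> 4" using bnds by (auto split: split_indicator simp: abs_le_iff; linarith)
      have "?f (0,0,0) + (\<Sum>t<n. measure_pmf.expectation (D t) ?r) \<le> measure_pmf.expectation (D n) ?f"
        by (rule tele_ge[OF fb rb L2[OF K(1)]])
      also have "\<dots> \<le> real K" using E_abs[OF fb, of "D n"] by (simp add: abs_le_iff)
      finally have s: "(\<Sum>t<n. measure_pmf.expectation (D t) ?r) \<le> real K" by (simp add: Q_p_def)
      have "(\<Sum>t<n. (lp - mu - lp*\<epsilon>) + mu * P0 t + 0 * P0 t) \<le> (\<Sum>t<n. measure_pmf.expectation (D t) ?r)"
      proof (rule sum_mono)
        fix t
        have eq: "measure_pmf.expectation (D t) ?r = lp + (-mu) * P t {y. 0 < Q_p y} + (-lp) * P t {y. K \<le> Q_p y} + 0 * P t {}"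
          unfolding P_def by (rule E_ind3)
        have "lp * P t {y. K \<le> Q_p y} \<le> lp * \<epsilon>" using K(2) prm by (intro mult_left_mono) auto
        thus "(lp - mu - lp*\<epsilon>) + mu * P0 t + 0 * P0 t \<le> measure_pmf.expectation (D t) ?r"
          unfolding eq complp by (simp add: algebra_simps)
      qed
      thus ?thesis using s unfolding sum_lin2 SP0_def by simp
    qed
    have II: "real n * (ls - ls*\<epsilon>) + (-c) * SA n \<le> real K" for n
    proof -
      let ?f = "\<lambda>y. real (min (Q_s y) K)"
      let ?r = "\<lambda>x. ls + (-c) * indicator {y. Q_p y = 0 \<and> 0 < Q_s y} x + (-ls) * indicator {y. K \<le> Q_s y} x + 0 * indicator {} x"
      have fb: "\<And>y. \<bar>?f y\<bar> \<le> real K" by simp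
      have rb: "\<And>y. \<bar>?r y\<bar> \<le> 4" using bnds by (auto split: split_indicator simp: abs_le_iff; linarith)
      have "?f (0,0,0) + (\<Sum>t<n. measure_pmf.expectation (D t) ?r) \<le> measure_pmf.expectation (D n) ?f"
        by (rule tele_ge[OF fb rb L3[OF K(1)]])
      also have "\<dots> \<le> real K" using E_abs[OF fb, of "D n"] by (simp add: abs_le_iff)
      finally have s: "(\<Sum>t<n. measure_pmf.expectation (D t) ?r) \<le> real K" by (simp add: Q_s_def)
      have "(\<Sum>t<n. (ls - ls*\<epsilon>) + (-c) * PA t + 0 * PA t) \<le> (\<Sum>t<n. measure_pmf.expectation (D t) ?r)"
      proof (rule sum_mono)
        fix t
        have eq: "measure_pmf.expectation (D t) ?r = ls + (-c) * PA t + (-ls) * P t {y. K \<le> Q_s y} + 0 * P t {}"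
          unfolding P_def PA_def by (rule E_ind3)
        have "ls * P t {y. K \<le> Q_s y} \<le> ls * \<epsilon>" using K(2) prm by (intro mult_left_mono) auto
        thus "(ls - ls*\<epsilon>) + (-c) * PA t + 0 * PA t \<le> measure_pmf.expectation (D t) ?r"
          unfolding eq by (simp add: algebra_simps)
      qed
      thus ?thesis using s unfolding sum_lin2 SA_def by simp
    qed
    have III: "real n * (g - g*\<epsilon>) + (-g) * SP0 n + (-e) * SC n \<le> real K" for n
    proof -
      let ?f = "\<lambda>y. real (min (Q_sp y) K)"
      let ?r = "\<lambda>x. g + (-g) * indicator {y. Q_p y = 0} x + (-e) * indicator {y. Q_p y = 0 \<and> 0 < Q_sp y} x + (-g) * indicator {y. K \<le> Q_sp y} x"
      have fb: "\<And>y. \<bar>?f y\<bar> \<le> real K" by simp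
      have rb: "\<And>y. \<bar>?r y\<bar> \<le> 4" using bnds by (auto split: split_indicator simp: abs_le_iff; linarith)
      have "?f (0,0,0) + (\<Sum>t<n. measure_pmf.expectation (D t) ?r) \<le> measure_pmf.expectation (D n) ?f"
        by (rule tele_ge[OF fb rb L4[OF K(1)]])
      also have "\<dots> \<le> real K" using E_abs[OF fb, of "D n"] by (simp add: abs_le_iff)
      finally have s: "(\<Sum>t<n. measure_pmf.expectation (D t) ?r) \<le> real K" by (simp add: Q_sp_def)
      have "(\<Sum>t<n. (g - g*\<epsilon>) + (-g) * P0 t + (-e) * PC t) \<le> (\<Sum>t<n. measure_pmf.expectation (D t) ?r)"
      proof (rule sum_mono)
        fix t
        have eq: "measure_pmf.expectation (D t) ?r = g + (-g) * P0 t + (-e) * PC t + (-g) * P t {y. K \<le> Q_sp y}"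
          unfolding P_def P0_def PC_def by (rule E_ind3)
        have "g * P t {y. K \<le> Q_sp y} \<le> g * \<epsilon>" using K(2) par by (intro mult_left_mono) auto
        thus "(g - g*\<epsilon>) + (-g) * P0 t + (-e) * PC t \<le> measure_pmf.expectation (D t) ?r"
          unfolding eq by (simp add: algebra_simps)
      qed
      thus ?thesis using s unfolding sum_lin2 SP0_def SC_def by simp
    qed
    have mu0: "0 \<le> mu" "0 \<le> c" "0 \<le> e" "0 \<le> g" using par by auto
    have A1: "lp*(1-\<epsilon>) - mu*(1-\<beta>) \<le> 0"
    proof (rule lin_lim)
      fix n
      have h2: "mu*((real n - real m) * \<beta>) \<le> mu * SP0 n" using SPb[of n] mu0 by (intro mult_left_mono) auto
      show "real n * (lp*(1-\<epsilon>) - mu*(1-\<beta>)) \<le> real K + mu*real m*\<beta>"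
        using I[of n] h2 by (simp add: algebra_simps; linarith)
    qed
    have A2: "mu*ls*(1-\<epsilon>) - c*(mu - lp*(1-\<epsilon>) - mu*\<beta>) \<le> 0"
    proof (rule lin_lim)
      fix n
      have f1: "mu * (real n * (ls - ls*\<epsilon>) + (-c) * SA n) \<le> mu * real K" using II[of n] mu0 by (intro mult_left_mono) auto
      have f2: "(c*mu) * SA n \<le> (c*mu) * (SP0 n - (real n - real m) * \<beta>)" using SAb[of n] mu0 by (intro mult_left_mono) auto
      have f3: "c * (real n * (lp - mu - lp*\<epsilon>) + mu * SP0 n) \<le> c * real K" using I[of n] mu0 by (intro mult_left_mono) auto
      show "real n * (mu*ls*(1-\<epsilon>) - c*(mu - lp*(1-\<epsilon>) - mu*\<beta>)) \<le> mu * real K + c * real K + c*mu*real m*\<beta>"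
        using f1 f2 f3 by (simp add: algebra_simps; linarith)
    qed
    have A3: "mu*g*(1-\<epsilon>) - ((g+e)*(mu - lp*(1-\<epsilon>)) - mu*e*\<beta>) \<le> 0"
    proof (rule lin_lim)
      fix n
      have f1: "mu * (real n * (g - g*\<epsilon>) + (-g) * SP0 n + (-e) * SC n) \<le> mu * real K" using III[of n] mu0 by (intro mult_left_mono) auto
      have f2: "(mu*e) * SC n \<le> (mu*e) * (SP0 n - (real n - real m) * \<beta>)" using SCb[of n] mu0 by (intro mult_left_mono) auto
      have f3: "(g+e) * (real n * (lp - mu - lp*\<epsilon>) + mu * SP0 n) \<le> (g+e) * real K" using I[of n] mu0 by (intro mult_left_mono) auto
      show "real n * (mu*g*(1-\<epsilon>) - ((g+e)*(mu - lp*(1-\<epsilon>)) - mu*e*\<beta>)) \<le> mu * real K + (g+e) * real K + mu*e*real m*\<beta>"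
        using f1 f2 f3 by (simp add: algebra_simps; linarith)
    qed
    show ?thesis using A1 A2 A3 by linarith
  qed
  have G1: "lp \<le> mu*(1-\<beta>)"
    by (rule eps_lim[where Y=lp]) (use key in \<open>auto simp: algebra_simps\<close>)
  have G2: "mu*ls \<le> c*(mu - lp - mu*\<beta>)"
    by (rule eps_lim[where Y="mu*ls + c*lp"]) (use key in \<open>auto simp: algebra_simps\<close>)
  have G3: "mu*g \<le> (g+e)*(mu - lp) - mu*e*\<beta>"
    by (rule eps_lim[where Y="mu*g + (g+e)*lp"]) (use key in \<open>auto simp: algebra_simps\<close>)
  have "mu*\<beta> \<ge> 0" using par \<beta>0 by simp
  hence "lp \<le> mu" using G1 by (simp add: algebra_simps)
  hence lp1: "lp < 1" using par by linarith
  have "c*(lp + mu*\<beta>) \<ge> 0" using par \<beta>0 prm by simp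
  hence "mu*ls \<le> c*mu" using G2 by (simp add: algebra_simps)
  hence "ls \<le> c" using par by (simp add: mult.commute)
  hence ls1: "ls < 1" using par by linarith
  have "0 < \<beta>" using c0_pos[OF lp1 ls1] by (simp add: \<beta>_def)
  hence cmb: "0 < c*mu*\<beta>" "0 < mu*e*\<beta>" using par by simp_all
  have r1: "ls*mu < c*(mu-lp)" using G2 cmb by (simp add: algebra_simps)
  have r2: "lp*(g+e) < e*mu" using G3 cmb by (simp add: algebra_simps)
  show ?thesis using r1 r2 by blast
qed

end

theorem theorem1:
  fixes lp ls fpd fsd fps pq pa :: real
  assumes "0 < fpd" "fpd < 1" "0 < fsd" "fsd < 1" "0 < fps" "fps < 1"
    and "fpd < fsd"
    and "0 < pq" "pq < 1" "0 \<le> pa" "pa \<le> 1"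
    and "0 \<le> lp" "lp \<le> 1" "0 \<le> ls" "ls \<le> 1"
  shows "(queue_stable (state_dist lp ls fpd fsd fps pq pa) Q_p \<and>
          queue_stable (state_dist lp ls fpd fsd fps pq pa) Q_sp \<and>
          queue_stable (state_dist lp ls fpd fsd fps pq pa) Q_s)
         \<longleftrightarrow> (lp, ls) \<in> stab_region fpd fsd fps pq pa"
proof -
  interpret sys lp ls fpd fsd fps pq pa by unfold_locales (use assms in auto)
  have r1: "ls < pq*fsd*(1 - lp/(fpd + pa*fps*(1-fpd))) \<longleftrightarrow> ls*mu < c*(mu-lp)"
  proof -
    have "pq*fsd*(1 - lp/mu) = c*(mu-lp)/mu" using par by (simp add: field_simps)
    thus ?thesis using par by (simp add: pos_less_divide_eq)
  qed
  have r2: "lp < fsd * (1 - pq) * (fpd + pa * fps * (1 - fpd)) / (fsd * (1 - pq) + pa * fps * (1 - fpd))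
      \<longleftrightarrow> lp*(g+e) < e*mu"
  proof -
    have eg: "0 < e + g" using par by linarith
    have "fsd * (1 - pq) * mu / (fsd * (1 - pq) + g) = e*mu/(e+g)" by (simp add: mult.commute)
    thus ?thesis using eg by (simp add: pos_less_divide_eq algebra_simps)
  qed
  have reg: "(lp, ls) \<in> stab_region fpd fsd fps pq pa \<longleftrightarrow> ls*mu < c*(mu-lp) \<and> lp*(g+e) < e*mu"
    unfolding stab_region_def using r1 r2 by simp
  show ?thesis using reg necessity sufficiency by blast
qed

end
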